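(* For every $x\in(0,\infty)$ and $k\in\mathbb{Z}$, $\mathcal{S}_k\big(a^{\rm st}(x),b^{\rm st}(x),m^{\rm st}(x),n^{\rm st}(x)\big)=\big(a^{\rm st}(s_k(x)),b^{\rm st}(s_k(x)),m^{\rm st}(s_k(x)),n^{\rm st}(s_k(x))\big)$.
   Context: ABMN system on $\mathbb{Z}$: $a_i,b_i\ge0$, $m_i,n_i\in\mathbb{R}$ with $(a_i+b_i)(m_i+a_i)=a_im_{i+1}+b_im_{i-1}$, $(a_i+b_i)(n_i+b_i)=a_in_{i+1}+b_in_{i-1}$, $(a_i+b_i)^2=b_i(m_{i+1}-m_{i-1})$, $(a_i+b_i)^2=a_i(n_{i-1}-n_{i+1})$ for all $i$; positive if all $a_i,b_i>0$. A positive solution is standard if $\lim_{i\to-\infty}m_i=0$, $\lim_{i\to\infty}n_i=0$, $\lim_{i\to\infty}m_i=1$; for $x>0$, $(a^{\rm st}(x),b^{\rm st}(x),m^{\rm st}(x),n^{\rm st}(x))$ is the unique standard solution with central ratio $\frac{n_{-1}-n_0}{m_0-m_{-1}}=x$. $\mathcal{S}_k$ is the left shift by $k$: $(\mathcal{S}_kq)_i=q_{i+k}$ applied to all four components. $s(x)=\frac{(\omega-1)^2}{4(\omega+7)}$, $\omega=\sqrt{8x+1}$; $s_0=\mathrm{id}$, $s_{-1}(x)=1/s(1/x)$, $s_i=s\circ s_{i-1}$, $s_{-i}=s_{-1}\circ s_{-(i-1)}$ for $i\in\mathbb{N}_+$. *)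

theory Defs
  imports Complex_Main
begin

type_synonym abmn = "(int \<Rightarrow> real) \<times> (int \<Rightarrow> real) \<times> (int \<Rightarrow> real) \<times> (int \<Rightarrow> real)"

definition abmn_system :: "abmn \<Rightarrow> bool" where
  "abmn_system q \<longleftrightarrow> (case q of (a, b, m, n) \<Rightarrow>
     (\<forall>i. a i \<ge> 0 \<and> b i \<ge> 0 \<and>
        (a i + b i) * (m i + a i) = a i * m (i + 1) + b i * m (i - 1) \<and>
        (a i + b i) * (n i + b i) = a i * n (i + 1) + b i * n (i - 1) \<and>
        (a i + b i)^2 = b i * (m (i + 1) - m (i - 1)) \<and>
        (a i + b i)^2 = a i * (n (i - 1) - n (i + 1))))"

definition abmn_positive :: "abmn \<Rightarrow> bool" where
  "abmn_positive q \<longleftrightarrow> abmn_system q \<and>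
     (case q of (a, b, m, n) \<Rightarrow> (\<forall>i. a i > 0 \<and> b i > 0))"

definition abmn_standard :: "abmn \<Rightarrow> bool" where
  "abmn_standard q \<longleftrightarrow> abmn_positive q \<and>
     (case q of (a, b, m, n) \<Rightarrow>
        (m \<longlongrightarrow> 0) at_bot \<and> (n \<longlongrightarrow> 0) at_top \<and> (m \<longlongrightarrow> 1) at_top)"

definition central_ratio :: "abmn \<Rightarrow> real" where
  "central_ratio q = (case q of (a, b, m, n) \<Rightarrow> (n (-1) - n 0) / (m 0 - m (-1)))"

text \<open>The unique standard solution with central ratio x (uniqueness is asserted in the paper).\<close>
definition abmn_st :: "real \<Rightarrow> abmn" where
  "abmn_st x = (THE q. abmn_standard q \<and> central_ratio q = x)"

definition shiftS :: "int \<Rightarrow> abmn \<Rightarrow> abmn" where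
  "shiftS k q = (case q of (a, b, m, n) \<Rightarrow>
     (\<lambda>i. a (i + k), \<lambda>i. b (i + k), \<lambda>i. m (i + k), \<lambda>i. n (i + k)))"

definition sfun :: "real \<Rightarrow> real" where
  "sfun x = (let \<omega> = sqrt (8 * x + 1) in (\<omega> - 1)^2 / (4 * (\<omega> + 7)))"

definition sfun_m1 :: "real \<Rightarrow> real" where
  "sfun_m1 x = 1 / sfun (1 / x)"

definition s_iter :: "int \<Rightarrow> real \<Rightarrow> real" where
  "s_iter k = (if k \<ge> 0 then sfun ^^ nat k else sfun_m1 ^^ nat (- k))"

end

theory Submission
  imports Defs
begin


definition rho :: "real \<Rightarrow> real" where "rho t = (sqrt (8*t+1) - 1)/4"

lemma rho_pos: "t > 0 \<Longrightarrow> rho t > 0"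
  unfolding rho_def by (simp add: real_less_rsqrt)

lemma rho_eq: "t > 0 \<Longrightarrow> 2 * rho t ^ 2 + rho t = t"
proof -
  assume "t > 0"
  then have s: "sqrt (8*t+1) ^ 2 = 8*t+1" by simp
  show ?thesis unfolding rho_def using s by (simp add: power2_eq_square field_simps)
qed

lemma sfun_rho: assumes "p > 0" shows "sfun (2*p^2+p) = p^2/(2+p)"
proof -
  have "8*(2*p^2+p)+1 = (4*p+1)^2" by (simp add: power2_eq_square algebra_simps)
  then have "sqrt (8*(2*p^2+p)+1) = 4*p+1" using assms by simp
  then show ?thesis unfolding sfun_def Let_def using assms by (simp add: power2_eq_square field_simps)
qed

lemma rho_of: assumes "p > 0" shows "rho (2*p^2+p) = p"
proof -
  have "8*(2*p^2+p)+1 = (4*p+1)^2" by (simp add: power2_eq_square algebra_simps)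
  then have "sqrt (8*(2*p^2+p)+1) = 4*p+1" using assms by simp
  then show ?thesis unfolding rho_def by simp
qed

lemma sfun_rho': "t > 0 \<Longrightarrow> sfun t = rho t ^ 2 / (2 + rho t)"
  using sfun_rho[of "rho t"] rho_pos rho_eq by auto

lemma sfun_pos: assumes "t > 0" shows "sfun t > 0"
proof -
  have "rho t > 0" using rho_pos assms by simp
  then show ?thesis using sfun_rho' assms by simp
qed

lemma sfun_le: assumes "t > 0" shows "sfun t \<le> t / 8"
proof -
  define p where "p = rho t"
  have p: "p > 0" "t = 2*p^2+p" using rho_pos rho_eq assms p_def by auto
  have "p^2/(2+p) \<le> (2*p^2+p)/8"
  proof -
    have "0 \<le> p*(2*p^2 - 3*p + 2)"
    proof -
      have "2*p^2 - 3*p + 2 = 2*(p - 3/4)^2 + 7/8" by (simp add: power2_eq_square algebra_simps)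
      moreover have "0 \<le> (p - 3/4)^2" by simp
      ultimately have "2*p^2 - 3*p + 2 > 0" by linarith
      then show ?thesis using p by simp
    qed
    then have "8*p^2 \<le> (2*p^2+p)*(2+p)" by (simp add: power2_eq_square power3_eq_cube algebra_simps)
    then show ?thesis using p by (simp add: field_simps)
  qed
  moreover have "sfun t = p^2/(2+p)" using sfun_rho'[OF assms] unfolding p_def .
  moreover have "t/8 = (2*p^2+p)/8" using p(2) by simp
  ultimately show ?thesis by linarith
qed

lemma sfun_m1_pos: "t > 0 \<Longrightarrow> sfun_m1 t > 0"
  unfolding sfun_m1_def using sfun_pos by simp

lemma sfun_inv_aux: assumes "t > 0" shows "sfun (1 / sfun t) = 1 / t"
proof -
  define p where "p = rho t"
  have p: "p > 0" "t = 2*p^2+p" using rho_pos rho_eq assms p_def by auto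
  have st: "sfun t = p^2/(2+p)" using sfun_rho'[OF assms] unfolding p_def .
  have "1 / sfun t = 2*(1/p)^2 + 1/p" unfolding st using p by (simp add: power2_eq_square field_simps)
  then have "sfun (1 / sfun t) = (1/p)^2/(2+1/p)" using sfun_rho[of "1/p"] p by simp
  also have "\<dots> = 1/t" using p by (simp add: power2_eq_square field_simps)
  finally show ?thesis .
qed

lemma sfun_sfun_m1: "t > 0 \<Longrightarrow> sfun (sfun_m1 t) = t"
  unfolding sfun_m1_def using sfun_inv_aux[of "1/t"] by simp

lemma s_iter_pos: "x > 0 \<Longrightarrow> s_iter k x > 0"
proof -
  assume x: "x > 0"
  have a: "(sfun ^^ n) x > 0" for n by (induction n) (use x sfun_pos in auto)
  have b: "(sfun_m1 ^^ n) x > 0" for n by (induction n) (use x sfun_m1_pos in auto)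
  show ?thesis unfolding s_iter_def using a b by auto
qed

lemma s_iter_step: assumes "x > 0" shows "s_iter (i+1) x = sfun (s_iter i x)"
proof (cases "i \<ge> 0")
  case True
  then have "nat (i+1) = Suc (nat i)" by simp
  then show ?thesis unfolding s_iter_def using True by simp
next
  case False
  show ?thesis
  proof (cases "i = -1")
    case True
    then show ?thesis unfolding s_iter_def using sfun_sfun_m1 assms by simp
  next
    case F2: False
    then have "nat (-i) = Suc (nat (-(i+1)))" using False by simp
    then have "s_iter i x = sfun_m1 (s_iter (i+1) x)"
      unfolding s_iter_def using False F2 by simp
    then show ?thesis using sfun_sfun_m1 s_iter_pos assms by simp
  qed
qed



definition Psum :: "(int \<Rightarrow> real) \<Rightarrow> int \<Rightarrow> real" where
 "Psum w i = (if 0 \<le> i then (\<Sum>n<nat i. w (int n + 1)) else - (\<Sum>n<nat (-i). w (- int n)))"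

lemma Psum_diff: "Psum w i - Psum w (i-1) = w i"
proof -
  consider "i \<ge> 1" | "i = 0" | "i < 0" by linarith
  then show ?thesis
  proof cases
    case 1
    then have "nat i = Suc (nat (i-1))" by simp
    then show ?thesis unfolding Psum_def using 1 by simp
  next
    case 2
    then show ?thesis unfolding Psum_def by simp
  next
    case 3
    then have "nat (-(i-1)) = Suc (nat (-i))" by simp
    then show ?thesis unfolding Psum_def using 3 by simp
  qed
qed

lemma Psum_top: assumes "summable (\<lambda>n. w (int n + 1))"
  shows "(Psum w \<longlongrightarrow> suminf (\<lambda>n. w (int n + 1))) at_top"
proof -
  have L: "(\<lambda>k. \<Sum>n<k. w (int n + 1)) \<longlonglongrightarrow> suminf (\<lambda>n. w (int n + 1))"
    using summable_LIMSEQ[OF assms] .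
  have L2: "((\<lambda>i. \<Sum>n<nat i. w (int n + 1)) \<longlongrightarrow> suminf (\<lambda>n. w (int n + 1))) at_top"
    using filterlim_compose[OF L filterlim_nat_sequentially] by (simp add: o_def)
  have ev: "eventually (\<lambda>i. (\<Sum>n<nat i. w (int n + 1)) = Psum w i) at_top"
    using eventually_ge_at_top[of "0::int"] by eventually_elim (simp add: Psum_def)
  show ?thesis using Lim_transform_eventually[OF L2 ev] .
qed

lemma nat_uminus_at_bot: "filterlim (\<lambda>i::int. nat (-i)) sequentially at_bot"
  unfolding filterlim_at_top eventually_at_bot_linorder
  apply (intro allI) subgoal for Z by (rule exI[of _ "- int Z"]) auto done

lemma Psum_bot: assumes "summable (\<lambda>n. w (- int n))"
  shows "(Psum w \<longlongrightarrow> - suminf (\<lambda>n. w (- int n))) at_bot"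
proof -
  have L: "(\<lambda>k. - (\<Sum>n<k. w (- int n))) \<longlonglongrightarrow> - suminf (\<lambda>n. w (- int n))"
    using tendsto_minus[OF summable_LIMSEQ[OF assms]] .
  have L2: "((\<lambda>i. - (\<Sum>n<nat (-i). w (- int n))) \<longlongrightarrow> - suminf (\<lambda>n. w (- int n))) at_bot"
    using filterlim_compose[OF L nat_uminus_at_bot] by (simp add: o_def)
  have ev: "eventually (\<lambda>i. - (\<Sum>n<nat (-i). w (- int n)) = Psum w i) at_bot"
    using eventually_le_at_bot[of "0::int"] by eventually_elim (auto simp add: Psum_def)
  show ?thesis using Lim_transform_eventually[OF L2 ev] .
qed

lemma shift_top: "(f \<longlongrightarrow> L) at_top \<Longrightarrow> ((\<lambda>i::int. f (i + k)) \<longlongrightarrow> L) at_top"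
proof -
  assume f: "(f \<longlongrightarrow> L) at_top"
  have "filterlim (\<lambda>i::int. i + k) at_top at_top"
    unfolding filterlim_at_top eventually_at_top_linorder
    apply (intro allI) subgoal for Z by (rule exI[of _ "Z - k"]) auto done
  from filterlim_compose[OF f this] show ?thesis by (simp add: o_def)
qed

lemma shift_bot: "(f \<longlongrightarrow> L) at_bot \<Longrightarrow> ((\<lambda>i::int. f (i + k)) \<longlongrightarrow> L) at_bot"
proof -
  assume f: "(f \<longlongrightarrow> L) at_bot"
  have "filterlim (\<lambda>i::int. i + k) at_bot at_bot"
    unfolding filterlim_at_bot eventually_at_bot_linorder
    apply (intro allI) subgoal for Z by (rule exI[of _ "Z - k"]) auto done
  from filterlim_compose[OF f this] show ?thesis by (simp add: o_def)
qed

lemma sys_char: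
  fixes a b mi mp mm :: real
  assumes a: "a > 0" and b: "b > 0"
  shows "((a+b)*(mi+a) = a*mp + b*mm \<and> (a+b)^2 = b*(mp-mm)) \<longleftrightarrow> (mi - mm = a^2/b \<and> mp - mi = 2*a+b)"
proof
  assume h: "(a+b)*(mi+a) = a*mp + b*mm \<and> (a+b)^2 = b*(mp-mm)"
  have id: "(a+b)*(b*(mi - mm) - a^2) = b*((a+b)*(mi+a) - a*mp - b*mm) + a*(b*(mp-mm) - (a+b)^2)"
    by (simp add: algebra_simps power2_eq_square)
  then have "(a+b)*(b*(mi - mm) - a^2) = 0" using h by simp
  then have "b*(mi - mm) = a^2" using a b by simp
  then have 1: "mi - mm = a^2/b" using b by (simp add: field_simps)
  have 2: "mp - mm = (a+b)^2/b" using h b by (simp add: field_simps)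
  have "mp - mi = (a+b)^2/b - a^2/b" using 1 2 by simp
  also have "\<dots> = 2*a+b" using b by (simp add: field_simps power2_eq_square)
  finally show "mi - mm = a^2/b \<and> mp - mi = 2*a+b" using 1 by simp
next
  assume h: "mi - mm = a^2/b \<and> mp - mi = 2*a+b"
  then have mm: "mm = mi - a^2/b" and mp: "mp = mi + 2*a+b" by auto
  show "(a+b)*(mi+a) = a*mp + b*mm \<and> (a+b)^2 = b*(mp-mm)"
    unfolding mm mp using a b by (simp add: field_simps power2_eq_square)
qed



lemma int_all: "P (0::int) \<Longrightarrow> (\<And>i. P i \<Longrightarrow> P (i+1)) \<Longrightarrow> (\<And>i. P i \<Longrightarrow> P (i-1)) \<Longrightarrow> P i"
  using int_induct[of P 0] by blast

lemma const_int: fixes f :: "int \<Rightarrow> real" assumes "\<And>i. f i - f (i-1) = 0" shows "f i = f 0"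
proof (induction i rule: int_all)
  case 1 then show ?case by simp
next
  case (2 i) then show ?case using assms[of "i+1"] by simp
next
  case (3 i) then show ?case using assms[of i] by simp
qed

lemma pos_facts:
  assumes "abmn_positive (a,b,m,n)"
  shows "a i > 0" "b i > 0" "m i - m (i-1) = a i^2/b i" "m (i+1) - m i = 2*a i + b i"
        "n i - n (i+1) = b i^2/a i" "n (i-1) - n i = 2*b i + a i"
proof -
  have S: "(a i + b i) * (m i + a i) = a i * m (i + 1) + b i * m (i - 1) \<and>
        (a i + b i) * (n i + b i) = a i * n (i + 1) + b i * n (i - 1) \<and>
        (a i + b i)^2 = b i * (m (i + 1) - m (i - 1)) \<and>
        (a i + b i)^2 = a i * (n (i - 1) - n (i + 1))"
  proof -
    have "abmn_system (a,b,m,n)" using assms unfolding abmn_positive_def by simp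
    then have "\<forall>i. 0 \<le> a i \<and> 0 \<le> b i \<and>
        (a i + b i) * (m i + a i) = a i * m (i + 1) + b i * m (i - 1) \<and>
        (a i + b i) * (n i + b i) = a i * n (i + 1) + b i * n (i - 1) \<and>
        (a i + b i)^2 = b i * (m (i + 1) - m (i - 1)) \<and>
        (a i + b i)^2 = a i * (n (i - 1) - n (i + 1))" unfolding abmn_system_def prod.case by assumption
    then show ?thesis by blast
  qed
  show a: "a i > 0" and b: "b i > 0" using assms unfolding abmn_positive_def by auto
  have 1: "m i - m (i-1) = a i^2/b i \<and> m (i+1) - m i = 2*a i + b i"
    using sys_char[OF a b, of "m i" "m (i+1)" "m (i-1)"] S by simp
  have 2: "n i - n (i+1) = b i^2/a i \<and> n (i-1) - n i = 2*b i + a i"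
    using sys_char[OF b a, of "n i" "n (i-1)" "n (i+1)"] S by (simp add: add.commute)
  show "m i - m (i-1) = a i^2/b i" "m (i+1) - m i = 2*a i + b i"
        "n i - n (i+1) = b i^2/a i" "n (i-1) - n i = 2*b i + a i" using 1 2 by auto
qed

lemma k_inj: fixes p q :: real assumes "p > 0" "q > 0" "2*p^2+p = 2*q^2+q" shows "p = q"
proof -
  have "(p - q)*(2*(p+q)+1) = 0" using assms(3) by (simp add: algebra_simps power2_eq_square)
  then show ?thesis using assms by simp
qed

lemma h_inj: fixes p q :: real assumes "p > 0" "q > 0" "p^2/(2+p) = q^2/(2+q)" shows "p = q"
proof -
  have "p^2*(2+q) = q^2*(2+p)" using assms by (simp add: field_simps)
  then have "(p - q)*(2*p+2*q+p*q) = 0" by (simp add: algebra_simps power2_eq_square)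
  moreover have "2*p+2*q+p*q > 0" using assms by (intro add_pos_pos mult_pos_pos) auto
  ultimately show ?thesis by simp
qed

lemma rho_rel:
  assumes "abmn_positive (a,b,m,n)"
  shows "(n (i-1) - n i)/(m i - m (i-1)) = 2*(b i/a i)^2 + b i/a i"
        "2*(b (i+1)/a (i+1))^2 + b (i+1)/a (i+1) = (b i/a i)^2/(2 + b i/a i)"
proof -
  note F = pos_facts[OF assms]
  have a: "a i > 0" "b i > 0" "a (i+1) > 0" "b (i+1) > 0" using F by auto
  show "(n (i-1) - n i)/(m i - m (i-1)) = 2*(b i/a i)^2 + b i/a i"
    unfolding F(3)[of i] F(6)[of i] using a by (simp add: field_simps power2_eq_square)
  have e1: "n i - n (i+1) = 2*b (i+1) + a (i+1)" using F(6)[of "i+1"] by simp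
  have e2: "m (i+1) - m i = a (i+1)^2/b (i+1)" using F(3)[of "i+1"] by simp
  have "2*(b (i+1)/a (i+1))^2 + b (i+1)/a (i+1) = (n i - n (i+1))/(m (i+1) - m i)"
    unfolding e1 e2 using a by (simp add: field_simps power2_eq_square)
  also have "\<dots> = (b i^2/a i)/(2*a i + b i)" using F(4)[of i] F(5)[of i] by simp
  also have "\<dots> = (b i/a i)^2/(2 + b i/a i)" using a by (simp add: field_simps power2_eq_square)
  finally show "2*(b (i+1)/a (i+1))^2 + b (i+1)/a (i+1) = (b i/a i)^2/(2 + b i/a i)" .
qed

lemma uniq:
  assumes S1: "abmn_standard (a,b,m,n)" and S2: "abmn_standard (a',b',m',n')"
    and R: "central_ratio (a,b,m,n) = central_ratio (a',b',m',n')"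
  shows "(a,b,m,n) = (a',b',m',n')"
proof -
  have P1: "abmn_positive (a,b,m,n)" and P2: "abmn_positive (a',b',m',n')"
    using S1 S2 unfolding abmn_standard_def by auto
  note F1 = pos_facts[OF P1] and F2 = pos_facts[OF P2]
  note R1 = rho_rel[OF P1] and R2 = rho_rel[OF P2]
  define p where "p i = b i / a i" for i
  define p' where "p' i = b' i / a' i" for i
  have pp: "p i > 0" "p' i > 0" for i unfolding p_def p'_def using F1 F2 by auto
  have peq: "p i = p' i" for i
  proof (induction i rule: int_all)
    case 1
    have "2*(p 0)^2 + p 0 = 2*(p' 0)^2 + p' 0"
      using R1(1)[of 0] R2(1)[of 0] R unfolding central_ratio_def p_def p'_def by simp
    then show ?case using k_inj pp by blast
  next
    case (2 i)
    have "2*(p (i+1))^2 + p (i+1) = 2*(p' (i+1))^2 + p' (i+1)"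
      using R1(2)[of i] R2(2)[of i] 2 unfolding p_def p'_def by simp
    then show ?case using k_inj pp by blast
  next
    case (3 i)
    have "(p (i-1))^2/(2 + p (i-1)) = (p' (i-1))^2/(2 + p' (i-1))"
      using R1(2)[of "i-1"] R2(2)[of "i-1"] 3 unfolding p_def p'_def by simp
    then show ?case using h_inj pp by blast
  qed
  define d where "d i = m i - m (i-1)" for i
  define d' where "d' i = m' i - m' (i-1)" for i
  have aeq: "a i = p i * d i" "a' i = p' i * d' i" for i
    unfolding p_def p'_def d_def d'_def F1(3) F2(3) using F1(1)[of i] F1(2)[of i] F2(1)[of i] F2(2)[of i]
    by (simp_all add: field_simps power2_eq_square)
  have dstep: "d (i+1) = d i * (p i * (2 + p i))" "d' (i+1) = d' i * (p' i * (2 + p' i))" for i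
  proof -
    have "d (i+1) = 2*a i + b i" unfolding d_def using F1(4)[of i] by simp
    also have "\<dots> = a i * (2 + p i)" unfolding p_def using F1(1)[of i] by (simp add: field_simps)
    finally show "d (i+1) = d i * (p i * (2 + p i))" using aeq(1)[of i] by simp
    have "d' (i+1) = 2*a' i + b' i" unfolding d'_def using F2(4)[of i] by simp
    also have "\<dots> = a' i * (2 + p' i)" unfolding p'_def using F2(1)[of i] by (simp add: field_simps)
    finally show "d' (i+1) = d' i * (p' i * (2 + p' i))" using aeq(2)[of i] by simp
  qed
  have gpos: "p i * (2 + p i) > 0" for i using pp[of i] by (intro mult_pos_pos add_pos_pos) auto
  define l where "l = d 0 / d' 0"
  have dpos: "d' i > 0" for i unfolding d'_def F2(3) using F2(1)[of i] F2(2)[of i] by simp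
  have deq: "d i = l * d' i" for i
  proof (induction i rule: int_all)
    case 1 then show ?case unfolding l_def using dpos[of 0] by simp
  next
    case (2 i) then show ?case using dstep[of i] peq[of i] by simp
  next
    case (3 i)
    have X: "d i = d (i-1) * (p (i-1) * (2 + p (i-1)))" "d' i = d' (i-1) * (p (i-1) * (2 + p (i-1)))"
      using dstep[of "i-1"] peq[of "i-1"] by simp_all
    have "d (i-1) * (p (i-1) * (2 + p (i-1))) = (l * d' (i-1)) * (p (i-1) * (2 + p (i-1)))"
      using 3 X by (metis mult.assoc)
    then show ?case using gpos[of "i-1"] by auto
  qed
  have aeq2: "a i = l * a' i" for i using aeq deq peq by simp
  have beq2: "b i = l * b' i" for i
  proof -
    have "b i = p i * a i" "b' i = p' i * a' i" unfolding p_def p'_def using F1(1)[of i] F2(1)[of i] by simp_all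
    then show ?thesis using aeq2 peq by simp
  qed
  define f where "f i = m i - l * m' i" for i
  have fc: "f i = f 0" for i
    by (rule const_int) (use deq in \<open>simp add: f_def d_def d'_def algebra_simps\<close>)
  have fc': "f = (\<lambda>_. f 0)" using fc by blast
  have lim1: "(m \<longlongrightarrow> 0) at_bot" "(m' \<longlongrightarrow> 0) at_bot" "(m \<longlongrightarrow> 1) at_top" "(m' \<longlongrightarrow> 1) at_top"
    "(n \<longlongrightarrow> 0) at_top" "(n' \<longlongrightarrow> 0) at_top"
    using S1 S2 unfolding abmn_standard_def by auto
  have "(f \<longlongrightarrow> 0 - l * 0) at_bot" unfolding f_def by (intro tendsto_intros lim1)
  moreover have "(f \<longlongrightarrow> f 0) at_bot" by (subst fc') (rule tendsto_const)
  ultimately have f0: "f 0 = 0" using tendsto_unique[OF trivial_limit_at_bot_linorder] by fastforce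
  have "(f \<longlongrightarrow> 1 - l * 1) at_top" unfolding f_def by (intro tendsto_intros lim1)
  moreover have "(f \<longlongrightarrow> f 0) at_top" by (subst fc') (rule tendsto_const)
  ultimately have "f 0 = 1 - l" using tendsto_unique[OF trivial_limit_at_top_linorder] by fastforce
  then have l1: "l = 1" using f0 by simp
  have meq: "m i = m' i" for i using fc[of i] f0 l1 unfolding f_def by simp
  define g where "g i = n i - n' i" for i
  have gc: "g i = g 0" for i
  proof (rule const_int)
    fix i
    show "g i - g (i-1) = 0" unfolding g_def using F1(6)[of i] F2(6)[of i] aeq2[of i] beq2[of i] l1
      by (simp add: algebra_simps)
  qed
  have gc': "g = (\<lambda>_. g 0)" using gc by blast
  have "(g \<longlongrightarrow> 0 - 0) at_top" unfolding g_def by (intro tendsto_intros lim1)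
  moreover have "(g \<longlongrightarrow> g 0) at_top" by (subst gc') (rule tendsto_const)
  ultimately have "g 0 = 0" using tendsto_unique[OF trivial_limit_at_top_linorder] by fastforce
  then have neq: "n i = n' i" for i using gc[of i] unfolding g_def by simp
  show ?thesis using aeq2 beq2 l1 meq neq by auto
qed

lemma shift_standard:
  assumes "abmn_standard q" shows "abmn_standard (shiftS k q)"
proof -
  obtain a b m n where q: "q = (a,b,m,n)" by (cases q) auto
  have e1: "i + 1 + k = i + k + 1" "i - 1 + k = i + k - 1" for i :: int by simp_all
  have sys: "abmn_system (a,b,m,n)" and pos: "\<forall>i. a i > 0 \<and> b i > 0"
    and L: "(m \<longlongrightarrow> 0) at_bot" "(n \<longlongrightarrow> 0) at_top" "(m \<longlongrightarrow> 1) at_top"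
    using assms q unfolding abmn_standard_def abmn_positive_def by auto
  have all: "\<forall>i. 0 \<le> a i \<and> 0 \<le> b i \<and>
        (a i + b i) * (m i + a i) = a i * m (i + 1) + b i * m (i - 1) \<and>
        (a i + b i) * (n i + b i) = a i * n (i + 1) + b i * n (i - 1) \<and>
        (a i + b i)^2 = b i * (m (i + 1) - m (i - 1)) \<and>
        (a i + b i)^2 = a i * (n (i - 1) - n (i + 1))" using sys unfolding abmn_system_def prod.case by assumption
  have "abmn_system (\<lambda>i. a (i + k), \<lambda>i. b (i + k), \<lambda>i. m (i + k), \<lambda>i. n (i + k))"
    unfolding abmn_system_def prod.case
    apply (intro allI)
    subgoal for i using spec[OF all, of "i+k"] unfolding e1 by blast
    done
  moreover have "\<forall>i. a (i+k) > 0 \<and> b (i+k) > 0" using pos by simp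
  moreover have "((\<lambda>i. m (i + k)) \<longlongrightarrow> 0) at_bot" "((\<lambda>i. n (i + k)) \<longlongrightarrow> 0) at_top"
    "((\<lambda>i. m (i + k)) \<longlongrightarrow> 1) at_top" using L shift_top shift_bot by auto
  ultimately show ?thesis unfolding q shiftS_def abmn_standard_def abmn_positive_def by simp
qed



context
  fixes x :: real
  assumes xpos: "x > 0"
begin

definition "rr i = s_iter i x"
definition "pp i = rho (rr i)"
definition "gg i = pp i * (2 + pp i)"
definition "uu i = (if 0 \<le> i then (\<Prod>k<nat i. gg (int k)) else (\<Prod>k<nat (-i). 1 / gg (- int k - 1)))"
definition "ww i = uu i * rr i"

lemma rr_pos: "rr i > 0" unfolding rr_def using s_iter_pos xpos by simp
lemma rr_step: "rr (i+1) = sfun (rr i)" unfolding rr_def using s_iter_step xpos by simp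
lemma pp_pos: "pp i > 0" unfolding pp_def using rho_pos rr_pos by simp
lemma rr_pp: "rr i = 2 * pp i ^ 2 + pp i" unfolding pp_def using rho_eq rr_pos by simp
lemma rr_step_pp: "rr (i+1) = pp i ^ 2 / (2 + pp i)"
  unfolding rr_step pp_def using sfun_rho' rr_pos by simp
lemma gg_pos: "gg i > 0" unfolding gg_def using pp_pos[of i] by (intro mult_pos_pos add_pos_pos) auto
lemma gg_le: "gg i \<le> rr i * (2 + rr i)"
proof -
  have "pp i \<le> rr i" using rr_pp[of i] pp_pos[of i] by simp
  then show ?thesis unfolding gg_def using pp_pos[of i] by (intro mult_mono) auto
qed
lemma gg_ge: "gg i \<ge> rr i / 2"
  unfolding gg_def rr_pp using pp_pos[of i] by (simp add: power2_eq_square algebra_simps)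

lemma uu_pos: "uu i > 0"
  unfolding uu_def using gg_pos by (auto intro!: prod_pos)

lemma uu_step: "uu (i+1) = gg i * uu i"
proof -
  consider "i \<ge> 0" | "i = -1" | "i < -1" by linarith
  then show ?thesis
  proof cases
    case 1
    then have "nat (i+1) = Suc (nat i)" by simp
    then show ?thesis unfolding uu_def using 1 by simp
  next
    case 2
    then show ?thesis unfolding uu_def using gg_pos[of "-1"] by simp
  next
    case 3
    then have "nat (-i) = Suc (nat (-(i+1)))" by simp
    then have "uu i = uu (i+1) * (1 / gg i)" unfolding uu_def using 3 by simp
    then show ?thesis using gg_pos[of i] by simp
  qed
qed

lemma rr_upper: "rr (int n) \<le> x / 8^n"
proof (induction n)
  case 0 then show ?case unfolding rr_def s_iter_def by simp
next
  case (Suc n)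
  have "rr (int (Suc n)) = sfun (rr (int n))" using rr_step[of "int n"] by (simp add: add.commute)
  also have "\<dots> \<le> rr (int n) / 8" using sfun_le rr_pos by simp
  also have "\<dots> \<le> x / 8^Suc n" using Suc by (simp add: field_simps)
  finally show ?case .
qed

lemma rr_upper': "rr (int n) \<le> x"
proof -
  have "x / 8^n \<le> x" using xpos by (simp add: divide_le_eq)
  then show ?thesis using rr_upper[of n] by simp
qed

lemma rr_lower: "rr (- int n) \<ge> 8^n * x"
proof (induction n)
  case 0 then show ?case unfolding rr_def s_iter_def by simp
next
  case (Suc n)
  have "rr (- int n) = sfun (rr (- int (Suc n)))" using rr_step[of "- int (Suc n)"] by simp
  also have "\<dots> \<le> rr (- int (Suc n)) / 8" using sfun_le rr_pos by simp
  finally show ?case using Suc by simp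
qed

lemma summ_pos: "summable (\<lambda>n. uu (int n + 1))"
proof -
  obtain N where N: "8 * x < 8^N" using real_arch_pow[of 8 "8*x"] by auto
  show ?thesis
  proof (rule summable_ratio_test[of "1/2" N])
    fix n assume n: "n \<ge> N"
    have "(8::real)^N \<le> 8^Suc n" using n by (intro power_increasing) auto
    then have "x / 8^Suc n \<le> x / 8^N" using xpos by (intro divide_left_mono) auto
    also have "\<dots> < 1/8" using N by (simp add: field_simps)
    finally have r1: "x / 8^Suc n < 1/8" .
    have r0: "rr (int n + 1) \<le> x / 8^Suc n" using rr_upper[of "Suc n"] by (simp add: add.commute)
    have r: "rr (int n + 1) < 1/8" using r0 r1 by linarith
    have "gg (int n + 1) \<le> rr (int n + 1) * (2 + rr (int n + 1))" by (rule gg_le)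
    also have "\<dots> \<le> 1/8 * (2 + 1/8)" using r rr_pos[of "int n + 1"] by (intro mult_mono) auto
    finally have g: "gg (int n + 1) \<le> 1/2" by simp
    have "uu (int (Suc n) + 1) = gg (int n + 1) * uu (int n + 1)"
      using uu_step[of "int n + 1"] by (simp add: algebra_simps)
    then show "norm (uu (int (Suc n) + 1)) \<le> 1/2 * norm (uu (int n + 1))"
      using g uu_pos[of "int n + 1"] uu_pos[of "int (Suc n) + 1"] by (simp add: mult_right_mono)
  qed simp
qed

lemma summ_neg: "summable (\<lambda>n. uu (- int n))"
proof -
  obtain N where N: "4 / x < 8^N" using real_arch_pow[of 8 "4/x"] by auto
  show ?thesis
  proof (rule summable_ratio_test[of "1/2" N])
    fix n assume n: "n \<ge> N"
    have "(8::real)^N \<le> 8^Suc n" using n by (intro power_increasing) auto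
    then have "8^N * x \<le> 8^Suc n * x" using xpos by simp
    moreover have "4 < 8^N * x" using N xpos by (simp add: field_simps)
    ultimately have r: "rr (- int (Suc n)) > 4" using rr_lower[of "Suc n"] by simp
    then have g: "gg (- int (Suc n)) \<ge> 2" using gg_ge[of "- int (Suc n)"] by simp
    have "uu (- int n) = gg (- int (Suc n)) * uu (- int (Suc n))"
      using uu_step[of "- int (Suc n)"] by simp
    then have "2 * uu (- int (Suc n)) \<le> uu (- int n)"
      using g uu_pos[of "- int (Suc n)"] by (simp add: mult_right_mono)
    then show "norm (uu (- int (Suc n))) \<le> 1/2 * norm (uu (- int n))"
      using uu_pos[of "- int n"] uu_pos[of "- int (Suc n)"] by simp
  qed simp
qed

lemma summ_w: "summable (\<lambda>n. ww (int n + 1))"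
proof (rule summable_comparison_test[OF _ summable_mult[OF summ_pos, of x]])
  show "\<exists>N. \<forall>n\<ge>N. norm (ww (int n + 1)) \<le> x * uu (int n + 1)"
  proof (intro exI allI impI)
    fix n :: nat
    have "rr (int n + 1) \<le> x" using rr_upper'[of "Suc n"] by (simp add: add.commute)
    then show "norm (ww (int n + 1)) \<le> x * uu (int n + 1)"
      unfolding ww_def using uu_pos[of "int n + 1"] rr_pos[of "int n + 1"]
      by (simp add: mult.commute mult_left_mono)
  qed
qed

definition "Sm = suminf (\<lambda>n. uu (- int n))"
definition "Sp = suminf (\<lambda>n. uu (int n + 1))"
definition "SS = Sp + Sm"
definition "TT = suminf (\<lambda>n. ww (int n + 1))"
definition "qq = (\<lambda>i. pp i * uu i / SS, \<lambda>i. pp i ^ 2 * uu i / SS,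
                 \<lambda>i. (Psum uu i + Sm) / SS, \<lambda>i. (TT - Psum ww i) / SS)"

lemma SS_pos: "SS > 0"
proof -
  have "Sm > 0" unfolding Sm_def using summ_neg uu_pos by (intro suminf_pos) auto
  moreover have "Sp \<ge> 0" unfolding Sp_def using summ_pos uu_pos by (intro suminf_nonneg) (auto intro: less_imp_le)
  ultimately show ?thesis unfolding SS_def by simp
qed

lemma qq_standard: "abmn_standard qq"
proof -
  define a where "a i = pp i * uu i / SS" for i
  define b where "b i = pp i ^ 2 * uu i / SS" for i
  define m where "m i = (Psum uu i + Sm) / SS" for i
  define n where "n i = (TT - Psum ww i) / SS" for i
  have q: "qq = (a, b, m, n)" unfolding qq_def a_def b_def m_def n_def by simp
  have S: "SS > 0" by (rule SS_pos)
  have apos: "a i > 0" and bpos: "b i > 0" for i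
    unfolding a_def b_def using pp_pos[of i] uu_pos[of i] S by simp_all
  have eqs: "(a i + b i) * (m i + a i) = a i * m (i + 1) + b i * m (i - 1) \<and>
        (a i + b i) * (n i + b i) = a i * n (i + 1) + b i * n (i - 1) \<and>
        (a i + b i)^2 = b i * (m (i + 1) - m (i - 1)) \<and>
        (a i + b i)^2 = a i * (n (i - 1) - n (i + 1))" for i
  proof -
    have P: "pp i > 0" "uu i > 0" using pp_pos uu_pos by auto
    have d1: "m i - m (i-1) = a i ^2 / b i"
      unfolding m_def a_def b_def using Psum_diff[of uu i] P S by (simp add: field_simps power2_eq_square)
    have d2: "m (i+1) - m i = 2 * a i + b i"
    proof -
      have "m (i+1) - m i = uu (i+1) / SS" unfolding m_def using Psum_diff[of uu "i+1"] S by (simp add: field_simps)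
      then show ?thesis unfolding uu_step gg_def a_def b_def using S by (simp add: field_simps power2_eq_square)
    qed
    have d3: "n i - n (i+1) = b i ^2 / a i"
    proof -
      have "n i - n (i+1) = ww (i+1) / SS" unfolding n_def using Psum_diff[of ww "i+1"] S by (simp add: field_simps)
      also have "\<dots> = gg i * uu i * (pp i ^ 2 / (2 + pp i)) / SS" unfolding ww_def uu_step rr_step_pp by simp
      also have "\<dots> = b i ^2 / a i"
      proof -
        have ne: "2 + pp i \<noteq> 0" using P by simp
        have "gg i * uu i * (pp i ^ 2 / (2 + pp i)) = pp i ^ 3 * uu i"
          unfolding gg_def using ne by (simp add: field_simps power2_eq_square power3_eq_cube)
        moreover have "pp i ^ 3 * uu i / SS = b i ^2 / a i"
          unfolding a_def b_def using P S by (simp add: field_simps power2_eq_square power3_eq_cube)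
        ultimately show ?thesis by simp
      qed
      finally show ?thesis .
    qed
    have d4: "n (i-1) - n i = 2 * b i + a i"
    proof -
      have "n (i-1) - n i = ww i / SS" unfolding n_def using Psum_diff[of ww i] S by (simp add: field_simps)
      then show ?thesis unfolding ww_def rr_pp a_def b_def using S by (simp add: field_simps power2_eq_square)
    qed
    have A: "(a i + b i) * (m i + a i) = a i * m (i + 1) + b i * m (i - 1) \<and> (a i + b i)^2 = b i * (m (i + 1) - m (i - 1))"
      using sys_char[OF apos[of i] bpos[of i], of "m i" "m (i+1)" "m (i-1)"] d1 d2 by blast
    have B: "(b i + a i) * (n i + b i) = b i * n (i - 1) + a i * n (i + 1) \<and> (b i + a i)^2 = a i * (n (i - 1) - n (i + 1))"
      using sys_char[OF bpos[of i] apos[of i], of "n i" "n (i-1)" "n (i+1)"] d3 d4 by blast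
    show ?thesis using A B by (simp add: add.commute)
  qed
  have sys: "abmn_system qq" unfolding q abmn_system_def prod.case using eqs apos[THEN less_imp_le] bpos[THEN less_imp_le] by blast
  have L1: "(m \<longlongrightarrow> 0) at_bot"
  proof -
    have "(m \<longlongrightarrow> (- Sm + Sm) / SS) at_bot" unfolding m_def Sm_def
      by (intro tendsto_intros Psum_bot summ_neg) (use S in simp)
    then show ?thesis by simp
  qed
  have L2: "(m \<longlongrightarrow> 1) at_top"
  proof -
    have "(m \<longlongrightarrow> (Sp + Sm) / SS) at_top" unfolding m_def Sp_def
      by (intro tendsto_intros Psum_top summ_pos) (use S in simp)
    then show ?thesis using S unfolding SS_def by simp
  qed
  have L3: "(n \<longlongrightarrow> 0) at_top"
  proof -
    have "(n \<longlongrightarrow> (TT - TT) / SS) at_top" unfolding n_def TT_def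
      by (intro tendsto_intros Psum_top summ_w) (use S in simp)
    then show ?thesis by simp
  qed
  show ?thesis unfolding abmn_standard_def abmn_positive_def using sys L1 L2 L3 apos bpos q by simp
qed

lemma qq_ratio: "central_ratio (shiftS k qq) = s_iter k x"
proof -
  have S: "SS > 0" by (rule SS_pos)
  have "central_ratio (shiftS k qq) = ((TT - Psum ww (k-1)) / SS - (TT - Psum ww k) / SS) /
        ((Psum uu k + Sm) / SS - (Psum uu (k-1) + Sm) / SS)"
    unfolding central_ratio_def shiftS_def qq_def by (simp add: add.commute)
  also have "\<dots> = (ww k / SS) / (uu k / SS)"
  proof -
    have "(TT - Psum ww (k-1)) / SS - (TT - Psum ww k) / SS = ww k / SS"
      using Psum_diff[of ww k] S by (simp add: field_simps)
    moreover have "(Psum uu k + Sm) / SS - (Psum uu (k-1) + Sm) / SS = uu k / SS"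
      using Psum_diff[of uu k] S by (simp add: field_simps)
    ultimately show ?thesis by simp
  qed
  also have "\<dots> = rr k" unfolding ww_def using uu_pos[of k] S by simp
  finally show ?thesis unfolding rr_def .
qed

end

lemma existence: "x > 0 \<Longrightarrow> \<exists>q. abmn_standard q \<and> (\<forall>k. central_ratio (shiftS k q) = s_iter k x)"
  using qq_standard qq_ratio by blast


lemma st_eq:
  assumes "abmn_standard q" "central_ratio q = y"
  shows "abmn_st y = q"
  unfolding abmn_st_def
proof (rule the_equality)
  show "abmn_standard q \<and> central_ratio q = y" using assms by simp
next
  fix q' assume h: "abmn_standard q' \<and> central_ratio q' = y"
  obtain a b m n where q: "q = (a,b,m,n)" by (cases q) auto
  obtain a' b' m' n' where q': "q' = (a',b',m',n')" by (cases q') auto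
  show "q' = q" using uniq[of a' b' m' n' a b m n] h assms unfolding q q' by simp
qed

lemma shiftS_0: "shiftS 0 q = q"
  by (cases q) (simp add: shiftS_def)

theorem mainTheorem16:
  fixes x :: real and k :: int
  assumes "x > 0"
  shows "shiftS k (abmn_st x) = abmn_st (s_iter k x)"
proof -
  obtain q where q: "abmn_standard q" "\<And>k. central_ratio (shiftS k q) = s_iter k x"
    using existence[OF assms] by blast
  have "abmn_st x = q"
    using st_eq[OF q(1)] q(2)[of 0] unfolding shiftS_0 by (simp add: s_iter_def)
  moreover have "abmn_st (s_iter k x) = shiftS k q"
    using st_eq[OF shift_standard[OF q(1)] q(2)[of k]] .
  ultimately show ?thesis by simp
qed

end
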